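(* Let $\Gamma$ be a MaxSAT instance encoded with blocking variables, with $\mathrm{cost}(\Gamma)=k$, and let $A$ be the set of total assignments $\alpha$ with $\alpha\models\Gamma$ and $\mathrm{cost}(\alpha)=k$. Suppose (1) every two distinct assignments in $A$ have Hamming distance at least $d$, and (2) for every blocking variable $b$ there are $\alpha,\beta\in A$ with $\alpha(b)=0$ and $\beta(b)=1$. Then every derivation in the cost-SR calculus from $\Gamma$ that derives a unit clause $b$ for some blocking variable $b$ contains a clause $C$ introduced by the cost-SR rule whose witnessing substitution $\sigma$ satisfies $\mathrm{flip}(C,\sigma)\ge d$.
   Context: Literals, clauses, CNFs (multisets of clauses), $\mathrm{Var}(\Gamma)$. A substitution $\sigma$ maps each variable to $0$, $1$ or a literal, extended by $\sigma(\lnot x)=\lnot\sigma(x)$, $\sigma(0)=0$, $\sigma(1)=1$; $(\sigma\circ\tau)(x)=\sigma(\tau(x))$. A (partial) assignment has $\sigma(x)\in\{0,1,x\}$; total means all variables get Boolean values. $C{\upharpoonright}_\sigma$: apply $\sigma$ to each literal and simplify; $\sigma\models C$ if the result is $1$ or tautological; $\Gamma{\upharpoonright}_\sigma$ is the multiset of $C{\upharpoonright}_\sigma\neq1$ for $C\in\Gamma$. $\lnot C$ is the partial assignment falsifying all literals of $C$; $\tau\supseteq\rho$ means $\tau$ extends $\rho$. $\Gamma\vdash_1 C$ means unit propagation on $\Gamma{\upharpoonright}_{\lnot C}$ derives the empty clause; $\Gamma\vdash_1\Delta$ means $\Gamma\vdash_1 D$ for all $D\in\Delta$. A MaxSAT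 instance encoded with blocking variables is a CNF $\Gamma=H\cup\{C_1\lor b_1,\dots,C_m\lor b_m\}$ with distinct fresh variables $b_i$ (blocking variables). $\mathrm{cost}(\alpha)=\sum_i\alpha(b_i)$ for total $\alpha$; $\mathrm{cost}(\Gamma)=\min\{\mathrm{cost}(\alpha):\alpha\models\Gamma\}$. A clause $C$ is cost-SR w.r.t. $\Gamma$ via $\sigma$ if (1) $\Gamma{\upharpoonright}_{\lnot C}\vdash_1(\Gamma\cup\{C\}){\upharpoonright}_\sigma$ and (2) $\mathrm{cost}(\tau\circ\sigma)\le\mathrm{cost}(\tau)$ for all total $\tau\supseteq\lnot C$. A derivation in the cost-SR calculus from $\Gamma$ is a sequence $D_1,\dots,D_t$ where each $D_i$ is in $\Gamma$, or follows from earlier clauses by weakening or resolution, or is cost-SR (with an attached witnessing substitution) w.r.t. $\Gamma\cup\{D_1,\dots,D_{i-1}\}$ with $\mathrm{Var}(D_i)\subseteq\mathrm{Var}(\Gamma)$. For a clause $C$ derived by the cost-SR rule with witness $\sigma$, $\mathrm{flip}(C,\sigma)=\max_{\tau\supseteq\lnot C}\mathrm{HD}(\tau,\tau\circ\sigma)$ over total assignments $\tau$, where $\mathrm{HD}$ is the number of variables on which two total assignments differ. *)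

theory Defs
  imports Main "HOL-Library.Multiset"
begin

datatype 'v lit = Pos 'v | Neg 'v

fun neg_lit :: "'v lit \<Rightarrow> 'v lit" where
  "neg_lit (Pos x) = Neg x"
| "neg_lit (Neg x) = Pos x"

fun var_of :: "'v lit \<Rightarrow> 'v" where
  "var_of (Pos x) = x"
| "var_of (Neg x) = x"

type_synonym 'v clause = "'v lit set"
type_synonym 'v cnf = "'v clause multiset"

definition vars_clause :: "'v clause \<Rightarrow> 'v set" where
  "vars_clause C = var_of ` C"

definition vars_cnf :: "'v cnf \<Rightarrow> 'v set" where
  "vars_cnf \<Gamma> = (\<Union>C\<in>set_mset \<Gamma>. vars_clause C)"

datatype 'v val = Cst bool | Lit "'v lit"

type_synonym 'v subst = "'v \<Rightarrow> 'v val"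

fun neg_val :: "'v val \<Rightarrow> 'v val" where
  "neg_val (Cst b) = Cst (\<not> b)"
| "neg_val (Lit l) = Lit (neg_lit l)"

fun subst_lit :: "'v subst \<Rightarrow> 'v lit \<Rightarrow> 'v val" where
  "subst_lit \<sigma> (Pos x) = \<sigma> x"
| "subst_lit \<sigma> (Neg x) = neg_val (\<sigma> x)"

fun subst_val :: "'v subst \<Rightarrow> 'v val \<Rightarrow> 'v val" where
  "subst_val \<sigma> (Cst b) = Cst b"
| "subst_val \<sigma> (Lit l) = subst_lit \<sigma> l"

definition comp_subst :: "'v subst \<Rightarrow> 'v subst \<Rightarrow> 'v subst" where
  "comp_subst \<sigma> \<tau> = (\<lambda>x. subst_val \<sigma> (\<tau> x))"

definition total :: "'v subst \<Rightarrow> bool" where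
  "total \<alpha> \<longleftrightarrow> (\<forall>x. \<alpha> x = Cst True \<or> \<alpha> x = Cst False)"

text \<open>Restriction of a clause: None represents the result 1 (satisfied or tautological).\<close>
definition restrict_clause :: "'v clause \<Rightarrow> 'v subst \<Rightarrow> 'v clause option" where
  "restrict_clause C \<sigma> =
     (if (\<exists>l\<in>C. subst_lit \<sigma> l = Cst True)
         \<or> (\<exists>l\<in>C. \<exists>l'\<in>C. \<exists>m. subst_lit \<sigma> l = Lit m \<and> subst_lit \<sigma> l' = Lit (neg_lit m))
      then None
      else Some {m. \<exists>l\<in>C. subst_lit \<sigma> l = Lit m})"

definition models_clause :: "'v subst \<Rightarrow> 'v clause \<Rightarrow> bool" where
  "models_clause \<sigma> C \<longleftrightarrow> restrict_clause C \<sigma> = None"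

definition models :: "'v subst \<Rightarrow> 'v cnf \<Rightarrow> bool" where
  "models \<sigma> \<Gamma> \<longleftrightarrow> (\<forall>C\<in>#\<Gamma>. models_clause \<sigma> C)"

definition restrict_cnf :: "'v cnf \<Rightarrow> 'v subst \<Rightarrow> 'v cnf" where
  "restrict_cnf \<Gamma> \<sigma> = image_mset (\<lambda>C. the (restrict_clause C \<sigma>)) (filter_mset (\<lambda>C. restrict_clause C \<sigma> \<noteq> None) \<Gamma>)"

text \<open>The partial assignment falsifying all literals of C.\<close>
definition neg_clause :: "'v clause \<Rightarrow> 'v subst" where
  "neg_clause C = (\<lambda>x. if Pos x \<in> C then Cst False
                        else if Neg x \<in> C then Cst True
                        else Lit (Pos x))"

definition extends :: "'v subst \<Rightarrow> 'v subst \<Rightarrow> bool" where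
  "extends \<tau> \<rho> \<longleftrightarrow> (\<forall>x. \<rho> x \<noteq> Lit (Pos x) \<longrightarrow> \<tau> x = \<rho> x)"

inductive_set up_lits :: "'v cnf \<Rightarrow> 'v lit set" for F :: "'v cnf" where
  unit: "D \<in># F \<Longrightarrow> l \<in> D \<Longrightarrow> (\<forall>l'\<in>D - {l}. neg_lit l' \<in> up_lits F) \<Longrightarrow> l \<in> up_lits F"

definition up_conflict :: "'v cnf \<Rightarrow> bool" where
  "up_conflict F \<longleftrightarrow> (\<exists>D\<in>#F. \<forall>l\<in>D. neg_lit l \<in> up_lits F)"

definition up_implies :: "'v cnf \<Rightarrow> 'v clause \<Rightarrow> bool" where
  "up_implies \<Gamma> C \<longleftrightarrow> up_conflict (restrict_cnf \<Gamma> (neg_clause C))"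

definition up_implies_cnf :: "'v cnf \<Rightarrow> 'v cnf \<Rightarrow> bool" where
  "up_implies_cnf \<Gamma> \<Delta> \<longleftrightarrow> (\<forall>D\<in>#\<Delta>. up_implies \<Gamma> D)"

definition maxsat_cnf :: "'v cnf \<Rightarrow> 'v clause list \<Rightarrow> 'v list \<Rightarrow> 'v cnf" where
  "maxsat_cnf H Cs bs = H + mset (map2 (\<lambda>C b. insert (Pos b) C) Cs bs)"

definition blocking_encoding :: "'v cnf \<Rightarrow> 'v clause list \<Rightarrow> 'v list \<Rightarrow> bool" where
  "blocking_encoding H Cs bs \<longleftrightarrow>
     length Cs = length bs \<and> distinct bs \<and>
     (\<forall>b\<in>set bs. b \<notin> vars_cnf H \<and> (\<forall>C\<in>set Cs. b \<notin> vars_clause C))"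

definition cost :: "'v list \<Rightarrow> 'v subst \<Rightarrow> nat" where
  "cost bs \<alpha> = (\<Sum>b\<leftarrow>bs. if \<alpha> b = Cst True then 1 else 0)"

definition cost_cnf :: "'v list \<Rightarrow> 'v cnf \<Rightarrow> nat" where
  "cost_cnf bs \<Gamma> = (LEAST c. \<exists>\<alpha>. total \<alpha> \<and> models \<alpha> \<Gamma> \<and> cost bs \<alpha> = c)"

definition falsifying_totals :: "'v clause \<Rightarrow> 'v subst set" where
  "falsifying_totals C = {\<tau>. total \<tau> \<and> extends \<tau> (neg_clause C)}"

definition cost_sr :: "'v list \<Rightarrow> 'v cnf \<Rightarrow> 'v clause \<Rightarrow> 'v subst \<Rightarrow> bool" where
  "cost_sr bs \<Gamma> C \<sigma> \<longleftrightarrow>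
     up_implies_cnf (restrict_cnf \<Gamma> (neg_clause C)) (restrict_cnf (\<Gamma> + {#C#}) \<sigma>) \<and>
     (\<forall>\<tau>\<in>falsifying_totals C. cost bs (comp_subst \<tau> \<sigma>) \<le> cost bs \<tau>)"

datatype 'v justification = Axiom | Weaken nat | Resolve nat nat | CostSR "'v subst"

type_synonym 'v derivation = "('v clause \<times> 'v justification) list"

fun valid_step :: "'v list \<Rightarrow> 'v cnf \<Rightarrow> 'v clause list \<Rightarrow> 'v clause \<Rightarrow> 'v justification \<Rightarrow> bool" where
  "valid_step bs \<Gamma> prev D Axiom = (D \<in># \<Gamma>)"
| "valid_step bs \<Gamma> prev D (Weaken j) = (j < length prev \<and> prev ! j \<subseteq> D)"
| "valid_step bs \<Gamma> prev D (Resolve j k) =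
     (j < length prev \<and> k < length prev \<and>
      (\<exists>x. Pos x \<in> prev ! j \<and> Neg x \<in> prev ! k \<and>
           D = (prev ! j - {Pos x}) \<union> (prev ! k - {Neg x})))"
| "valid_step bs \<Gamma> prev D (CostSR \<sigma>) =
     (vars_clause D \<subseteq> vars_cnf \<Gamma> \<and> cost_sr bs (\<Gamma> + mset prev) D \<sigma>)"

definition derivation :: "'v list \<Rightarrow> 'v cnf \<Rightarrow> 'v derivation \<Rightarrow> bool" where
  "derivation bs \<Gamma> P \<longleftrightarrow>
     (\<forall>i<length P. valid_step bs \<Gamma> (map fst (take i P)) (fst (P ! i)) (snd (P ! i)))"

definition HD :: "'v subst \<Rightarrow> 'v subst \<Rightarrow> nat" where
  "HD \<alpha> \<beta> = card {x. \<alpha> x \<noteq> \<beta> x}"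

definition flip :: "'v clause \<Rightarrow> 'v subst \<Rightarrow> nat" where
  "flip C \<sigma> = Sup ((\<lambda>\<tau>. HD \<tau> (comp_subst \<tau> \<sigma>)) ` falsifying_totals C)"

end

theory Submission
  imports Defs
begin

lemma total_lit:
  assumes "total \<alpha>" shows "\<exists>b. subst_lit \<alpha> l = Cst b"
proof -
  have "\<alpha> (var_of l) = Cst True \<or> \<alpha> (var_of l) = Cst False"
    using assms unfolding total_def by blast
  then show ?thesis by (cases l) auto
qed

lemma total_val: "total \<alpha> \<Longrightarrow> \<exists>b. subst_val \<alpha> v = Cst b"
  by (cases v) (auto dest: total_lit)

lemma neg_lit_inv: "neg_lit (neg_lit l) = l"
  by (cases l) simp_all

lemma neg_val_inv: "neg_val (neg_val v) = v"
  by (cases v) (simp_all add: neg_lit_inv)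

lemma subst_lit_neg: "subst_lit \<alpha> (neg_lit l) = neg_val (subst_lit \<alpha> l)"
  by (cases l) (simp_all add: neg_val_inv)

lemma comp_lit: "subst_lit (comp_subst \<alpha> \<sigma>) l = subst_val \<alpha> (subst_lit \<sigma> l)"
proof (cases l)
  case (Pos x) then show ?thesis by (simp add: comp_subst_def)
next
  case (Neg x)
  show ?thesis
  proof (cases "\<sigma> x")
    case (Cst b) then show ?thesis using Neg by (simp add: comp_subst_def)
  next
    case (Lit m) then show ?thesis using Neg by (simp add: comp_subst_def subst_lit_neg)
  qed
qed

lemma neg_true:
  assumes "subst_lit \<alpha> (neg_lit l) = Cst True" shows "subst_lit \<alpha> l \<noteq> Cst True"
proof
  assume h: "subst_lit \<alpha> l = Cst True"
  have "subst_lit \<alpha> (neg_lit l) = Cst False" by (simp add: subst_lit_neg h)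
  then show False using assms by simp
qed

lemma models_clause_total:
  assumes "total \<alpha>"
  shows "models_clause \<alpha> C \<longleftrightarrow> (\<exists>l\<in>C. subst_lit \<alpha> l = Cst True)"
proof -
  have h: "subst_lit \<alpha> l \<noteq> Lit m" for l m
    using total_lit[OF assms, of l] by auto
  show ?thesis unfolding models_clause_def restrict_clause_def by (simp add: h)
qed

lemma total_comp:
  assumes "total \<alpha>" shows "total (comp_subst \<alpha> \<sigma>)"
  unfolding total_def
proof
  fix x
  obtain b where b: "subst_val \<alpha> (\<sigma> x) = Cst b" using total_val[OF assms] by blast
  show "comp_subst \<alpha> \<sigma> x = Cst True \<or> comp_subst \<alpha> \<sigma> x = Cst False"
    using b by (cases b) (simp_all add: comp_subst_def)
qed

lemma models_plus: "models \<alpha> (M + N) \<longleftrightarrow> models \<alpha> M \<and> models \<alpha> N"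
  unfolding models_def by auto

lemma neg_clause_partial: "neg_clause C x = Lit (Pos x) \<or> (\<exists>b. neg_clause C x = Cst b)"
  unfolding neg_clause_def by auto

lemma lemma_a:
  assumes tot: "total \<alpha>" and ext: "extends \<alpha> \<rho>"
    and part: "\<And>x. \<rho> x = Lit (Pos x) \<or> (\<exists>b. \<rho> x = Cst b)"
    and m: "models \<alpha> F"
  shows "models \<alpha> (restrict_cnf F \<rho>)"
  unfolding models_def
proof
  fix C' assume "C' \<in># restrict_cnf F \<rho>"
  then obtain C where C: "C \<in># F" and rs: "restrict_clause C \<rho> = Some C'"
    unfolding restrict_cnf_def by auto
  from rs have nt: "\<forall>l\<in>C. subst_lit \<rho> l \<noteq> Cst True"
    and C'eq: "C' = {m. \<exists>l\<in>C. subst_lit \<rho> l = Lit m}"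
    unfolding restrict_clause_def by (auto split: if_splits)
  from m C obtain l where l: "l \<in> C" "subst_lit \<alpha> l = Cst True"
    unfolding models_def using models_clause_total[OF tot] by blast
  have "subst_lit \<rho> l = Lit l"
  proof (cases "\<rho> (var_of l) = Lit (Pos (var_of l))")
    case True then show ?thesis by (cases l) auto
  next
    case False
    then have "\<alpha> (var_of l) = \<rho> (var_of l)" using ext unfolding extends_def by auto
    then have "subst_lit \<rho> l = subst_lit \<alpha> l" by (cases l) auto
    then show ?thesis using l nt by auto
  qed
  then have "l \<in> C'" using C'eq l by auto
  then show "models_clause \<alpha> C'" using models_clause_total[OF tot] l by auto
qed

lemma falsify_ext:
  assumes tot: "total \<alpha>" and nm: "\<not> models_clause \<alpha> D"
  shows "extends \<alpha> (neg_clause D)"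
proof -
  have f: "\<forall>l\<in>D. subst_lit \<alpha> l \<noteq> Cst True" using nm models_clause_total[OF tot] by auto
  show ?thesis unfolding extends_def
  proof (intro allI impI)
    fix x assume "neg_clause D x \<noteq> Lit (Pos x)"
    then have "Pos x \<in> D \<or> Neg x \<in> D" unfolding neg_clause_def by (auto split: if_splits)
    have ax: "\<alpha> x = Cst True \<or> \<alpha> x = Cst False" using tot unfolding total_def by blast
    show "\<alpha> x = neg_clause D x"
    proof (cases "Pos x \<in> D")
      case True
      then have "subst_lit \<alpha> (Pos x) \<noteq> Cst True" using f by blast
      then have "\<alpha> x = Cst False" using ax by simp
      then show ?thesis using True unfolding neg_clause_def by simp
    next
      case False
      then have N: "Neg x \<in> D" using \<open>Pos x \<in> D \<or> Neg x \<in> D\<close> by blast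
      then have "subst_lit \<alpha> (Neg x) \<noteq> Cst True" using f by blast
      then have "\<alpha> x \<noteq> Cst False" by auto
      then have "\<alpha> x = Cst True" using ax by blast
      then show ?thesis using False N unfolding neg_clause_def by simp
    qed
  qed
qed

lemma up_true:
  assumes tot: "total \<alpha>" and m: "models \<alpha> G"
  shows "l \<in> up_lits G \<Longrightarrow> subst_lit \<alpha> l = Cst True"
proof (induction rule: up_lits.induct)
  case (unit D l)
  have others: "\<forall>l'\<in>D - {l}. subst_lit \<alpha> l' \<noteq> Cst True"
  proof
    fix l' assume "l' \<in> D - {l}"
    then have "subst_lit \<alpha> (neg_lit l') = Cst True" using unit.IH by blast
    then show "subst_lit \<alpha> l' \<noteq> Cst True" by (rule neg_true)
  qed
  from unit.hyps(1) m obtain l' where "l' \<in> D" "subst_lit \<alpha> l' = Cst True"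
    unfolding models_def using models_clause_total[OF tot] by blast
  then show ?case using others by (cases "l' = l") auto
qed

lemma lemma_b:
  assumes tot: "total \<alpha>" and m: "models \<alpha> G" and up: "up_implies G D"
  shows "models_clause \<alpha> D"
proof (rule ccontr)
  assume nm: "\<not> models_clause \<alpha> D"
  have m2: "models \<alpha> (restrict_cnf G (neg_clause D))"
    by (rule lemma_a[OF tot falsify_ext[OF tot nm] neg_clause_partial m])
  from up obtain D' where D': "D' \<in># restrict_cnf G (neg_clause D)"
    "\<forall>l\<in>D'. neg_lit l \<in> up_lits (restrict_cnf G (neg_clause D))"
    unfolding up_implies_def up_conflict_def by auto
  have "\<forall>l\<in>D'. subst_lit \<alpha> l \<noteq> Cst True"
  proof
    fix l assume "l \<in> D'"
    then have "neg_lit l \<in> up_lits (restrict_cnf G (neg_clause D))" using D'(2) by blast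
    then have "subst_lit \<alpha> (neg_lit l) = Cst True" by (rule up_true[OF tot m2])
    then show "subst_lit \<alpha> l \<noteq> Cst True" by (rule neg_true)
  qed
  moreover have "models_clause \<alpha> D'" using m2 D'(1) unfolding models_def by auto
  ultimately show False using models_clause_total[OF tot] by auto
qed

lemma lemma_c:
  assumes tot: "total \<alpha>" and m: "models \<alpha> (restrict_cnf G \<sigma>)"
  shows "models (comp_subst \<alpha> \<sigma>) G"
  unfolding models_def
proof
  fix C assume C: "C \<in># G"
  show "models_clause (comp_subst \<alpha> \<sigma>) C"
  proof (cases "restrict_clause C \<sigma>")
    case None
    then consider (a) l where "l \<in> C" "subst_lit \<sigma> l = Cst True"
      | (b) l l' m where "l \<in> C" "l' \<in> C" "subst_lit \<sigma> l = Lit m" "subst_lit \<sigma> l' = Lit (neg_lit m)"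
      unfolding restrict_clause_def by (auto split: if_splits)
    then show ?thesis
    proof cases
      case a
      then have "subst_lit (comp_subst \<alpha> \<sigma>) l = Cst True" by (simp add: comp_lit)
      then show ?thesis using a(1) models_clause_total[OF total_comp[OF tot]] by blast
    next
      case b
      obtain c where c: "subst_lit \<alpha> m = Cst c" using total_lit[OF tot] by blast
      have "subst_lit (comp_subst \<alpha> \<sigma>) l = Cst c" "subst_lit (comp_subst \<alpha> \<sigma>) l' = Cst (\<not> c)"
        using b c by (auto simp: comp_lit subst_lit_neg)
      then show ?thesis using b models_clause_total[OF total_comp[OF tot]]
        by (cases c) auto
    qed
  next
    case (Some C')
    have "C \<in># filter_mset (\<lambda>C. restrict_clause C \<sigma> \<noteq> None) G" using C Some by simp
    then have "C' \<in># restrict_cnf G \<sigma>" unfolding restrict_cnf_def set_image_mset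
      using Some by (intro image_eqI[where x = C]) simp_all
    then have "models_clause \<alpha> C'" using m unfolding models_def by auto
    then obtain mm where "mm \<in> C'" "subst_lit \<alpha> mm = Cst True"
      using models_clause_total[OF tot] by auto
    moreover have "C' = {m. \<exists>l\<in>C. subst_lit \<sigma> l = Lit m}"
      using Some unfolding restrict_clause_def by (auto split: if_splits)
    ultimately obtain l where "l \<in> C" "subst_lit (comp_subst \<alpha> \<sigma>) l = Cst True"
      by (auto simp: comp_lit)
    then show ?thesis using models_clause_total[OF total_comp[OF tot]] by auto
  qed
qed

theorem theorem5p1:
  fixes H :: "('v::finite) cnf" and Cs :: "'v clause list" and bs :: "'v list"
    and A :: "'v subst set" and k d :: nat and P :: "'v derivation"
  assumes enc: "blocking_encoding H Cs bs"
    and costk: "cost_cnf bs (maxsat_cnf H Cs bs) = k"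
    and A_def: "A = {\<alpha>. total \<alpha> \<and> models \<alpha> (maxsat_cnf H Cs bs) \<and> cost bs \<alpha> = k}"
    and dist: "\<forall>\<alpha>\<in>A. \<forall>\<beta>\<in>A. \<alpha> \<noteq> \<beta> \<longrightarrow> d \<le> HD \<alpha> \<beta>"
    and both: "\<forall>b\<in>set bs. \<exists>\<alpha>\<in>A. \<exists>\<beta>\<in>A. \<alpha> b = Cst False \<and> \<beta> b = Cst True"
    and der: "derivation bs (maxsat_cnf H Cs bs) P"
    and unit: "\<exists>b\<in>set bs. \<exists>j<length P. fst (P ! j) = {Pos b}"
  shows "\<exists>i<length P. \<exists>\<sigma>. snd (P ! i) = CostSR \<sigma> \<and> d \<le> flip (fst (P ! i)) \<sigma>"
proof (rule ccontr)
  let ?G = "maxsat_cnf H Cs bs"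
  assume "\<not> ?thesis"
  then have noflip: "\<And>i \<sigma>. i < length P \<Longrightarrow> snd (P ! i) = CostSR \<sigma> \<Longrightarrow> flip (fst (P ! i)) \<sigma> < d"
    by (meson not_le)
  have inv: "i \<le> length P \<Longrightarrow> \<forall>\<alpha>\<in>A. models \<alpha> (?G + mset (map fst (take i P)))" for i
  proof (induction i)
    case 0
    then show ?case using A_def by simp
  next
    case (Suc i)
    then have i: "i < length P" by simp
    let ?prev = "map fst (take i P)"
    let ?F = "?G + mset ?prev"
    let ?D = "fst (P ! i)"
    have vs: "valid_step bs ?G ?prev ?D (snd (P ! i))" using der i unfolding derivation_def by auto
    have IH: "\<forall>\<alpha>\<in>A. models \<alpha> ?F" using Suc by simp
    have tk: "map fst (take (Suc i) P) = ?prev @ [?D]" using i by (simp add: take_Suc_conv_app_nth)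
    have prevj: "j < length ?prev \<Longrightarrow> ?prev ! j \<in># ?F" for j
    proof -
      assume "j < length ?prev"
      then have "?prev ! j \<in> set ?prev" by (rule nth_mem)
      then show ?thesis by simp
    qed
    have mD: "models_clause \<alpha> ?D" if aA: "\<alpha> \<in> A" for \<alpha>
    proof -
      have tot: "total \<alpha>" and mF: "models \<alpha> ?F" and ca: "cost bs \<alpha> = k" using aA IH A_def by auto
      have mj: "j < length ?prev \<Longrightarrow> models_clause \<alpha> (?prev ! j)" for j
        using mF prevj unfolding models_def by blast
      show ?thesis
      proof (cases "snd (P ! i)")
        case Axiom
        then show ?thesis using vs mF unfolding models_def by auto
      next
        case (Weaken j)
        then have "j < length ?prev" "?prev ! j \<subseteq> ?D" using vs by auto
        then show ?thesis using mj models_clause_total[OF tot] by blast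
      next
        case (Resolve j k')
        have vs': "j < length ?prev \<and> k' < length ?prev \<and>
          (\<exists>x. Pos x \<in> ?prev ! j \<and> Neg x \<in> ?prev ! k' \<and>
           ?D = (?prev ! j - {Pos x}) \<union> (?prev ! k' - {Neg x}))"
          using vs unfolding Resolve valid_step.simps .
        then obtain x where x: "j < length ?prev" "k' < length ?prev" "Pos x \<in> ?prev ! j" "Neg x \<in> ?prev ! k'"
          "?D = (?prev ! j - {Pos x}) \<union> (?prev ! k' - {Neg x})"
          by blast
        obtain l1 where l1: "l1 \<in> ?prev ! j" "subst_lit \<alpha> l1 = Cst True"
          using mj[OF x(1)] unfolding models_clause_total[OF tot] by blast
        obtain l2 where l2: "l2 \<in> ?prev ! k'" "subst_lit \<alpha> l2 = Cst True"
          using mj[OF x(2)] unfolding models_clause_total[OF tot] by blast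
        have ax: "\<alpha> x = Cst True \<or> \<alpha> x = Cst False" using tot unfolding total_def by blast
        have "l1 \<in> ?D \<or> l2 \<in> ?D"
        proof (cases "\<alpha> x = Cst True")
          case True
          have "l2 \<noteq> Neg x"
          proof
            assume "l2 = Neg x"
            then have "subst_lit \<alpha> l2 = Cst False" using True by simp
            then show False using l2(2) by simp
          qed
          then have "l2 \<in> ?prev ! k' - {Neg x}" using l2(1) by blast
          then have "l2 \<in> ?D" by (subst x(5)) (rule UnI2)
          then show ?thesis by (rule disjI2)
        next
          case False
          then have F: "\<alpha> x = Cst False" using ax by blast
          have "l1 \<noteq> Pos x"
          proof
            assume "l1 = Pos x"
            then have "subst_lit \<alpha> l1 = Cst False" using F by simp
            then show False using l1(2) by simp
          qed
          then have "l1 \<in> ?prev ! j - {Pos x}" using l1(1) by blast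
          then have "l1 \<in> ?D" by (subst x(5)) (rule UnI1)
          then show ?thesis by (rule disjI1)
        qed
        then show ?thesis unfolding models_clause_total[OF tot] using l1(2) l2(2) by blast
      next
        case (CostSR \<sigma>)
        then have sr: "cost_sr bs ?F ?D \<sigma>" using vs by simp
        show ?thesis
        proof (rule ccontr)
          assume nm: "\<not> models_clause \<alpha> ?D"
          have ext: "extends \<alpha> (neg_clause ?D)" by (rule falsify_ext[OF tot nm])
          then have fal: "\<alpha> \<in> falsifying_totals ?D" using tot unfolding falsifying_totals_def by simp
          let ?\<beta> = "comp_subst \<alpha> \<sigma>"
          have cb: "cost bs ?\<beta> \<le> k" using sr fal ca unfolding cost_sr_def by auto
          have m1: "models \<alpha> (restrict_cnf ?F (neg_clause ?D))"
            by (rule lemma_a[OF tot ext neg_clause_partial mF])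
          have "models \<alpha> (restrict_cnf (?F + {#?D#}) \<sigma>)"
            using sr lemma_b[OF tot m1] unfolding cost_sr_def up_implies_cnf_def models_def by blast
          then have mb: "models ?\<beta> (?F + {#?D#})" by (rule lemma_c[OF tot])
          have tb: "total ?\<beta>" by (rule total_comp[OF tot])
          have mbG: "models ?\<beta> ?G" using mb models_plus by blast
          have "(LEAST c. \<exists>\<alpha>. total \<alpha> \<and> models \<alpha> ?G \<and> cost bs \<alpha> = c) \<le> cost bs ?\<beta>"
            by (rule Least_le) (use tb mbG in blast)
          then have "k \<le> cost bs ?\<beta>" using costk unfolding cost_cnf_def by simp
          then have "cost bs ?\<beta> = k" using cb by (rule le_antisym[rotated])
          then have bA: "?\<beta> \<in> A" unfolding A_def using tb mbG by blast
          have mbD: "models_clause ?\<beta> ?D" using mb unfolding models_def by auto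
          then have neq: "\<alpha> \<noteq> ?\<beta>" using nm by auto
          have "d \<le> HD \<alpha> ?\<beta>" using dist aA bA neq by blast
          also have "HD \<alpha> ?\<beta> \<le> flip ?D \<sigma>"
            unfolding flip_def
          proof (rule cSup_upper)
            show "HD \<alpha> ?\<beta> \<in> (\<lambda>\<tau>. HD \<tau> (comp_subst \<tau> \<sigma>)) ` falsifying_totals ?D" using fal by auto
            show "bdd_above ((\<lambda>\<tau>. HD \<tau> (comp_subst \<tau> \<sigma>)) ` falsifying_totals ?D)"
              unfolding bdd_above_def HD_def
            proof (rule exI[of _ "card (UNIV :: 'v set)"], rule ballI)
              fix y assume "y \<in> (\<lambda>\<tau>. card {x. \<tau> x \<noteq> comp_subst \<tau> \<sigma> x}) ` falsifying_totals ?D"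
              then obtain \<tau> where "y = card {x. \<tau> x \<noteq> comp_subst \<tau> \<sigma> x}" by blast
              then show "y \<le> card (UNIV :: 'v set)" by (simp add: card_mono)
            qed
          qed
          finally show False using noflip[OF i CostSR] by simp
        qed
      qed
    qed
    show ?case
    proof
      fix \<alpha> assume aA: "\<alpha> \<in> A"
      have "models \<alpha> ?F" using IH aA by blast
      moreover have "models \<alpha> {#?D#}" using mD[OF aA] unfolding models_def by simp
      ultimately have "models \<alpha> (?F + {#?D#})" unfolding models_plus by blast
      then show "models \<alpha> (?G + mset (map fst (take (Suc i) P)))"
        unfolding tk mset_append by (simp only: add.assoc mset_single_iff_right mset.simps)
    qed
  qed
  from unit obtain b j where b: "b \<in> set bs" "j < length P" "fst (P ! j) = {Pos b}" by auto
  from both b(1) obtain \<alpha> where a: "\<alpha> \<in> A" "\<alpha> b = Cst False" by auto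
  have "models \<alpha> (?G + mset (map fst (take (Suc j) P)))" using inv[of "Suc j"] b(2) a(1) by simp
  moreover have "{Pos b} \<in># mset (map fst (take (Suc j) P))"
    using b by (simp add: take_Suc_conv_app_nth)
  ultimately have "models_clause \<alpha> {Pos b}" unfolding models_def by simp
  moreover have "total \<alpha>" using a A_def by blast
  ultimately have "\<alpha> b = Cst True" using models_clause_total[of \<alpha> "{Pos b}"] by simp
  then show False using a(2) by simp
qed

end
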